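(* Let $D$ be a regular $(v,k,\lambda,\mu)$-PDS in a finite group $G$ with $0<\mu<k$ and $\sqrt\Delta\in\mathbb{Z}$. If $p$ is a prime and $p^\ell$ divides both $\theta_1$ and $\theta_2$, then $k\equiv0\pmod{p^\ell}$. In particular $k\equiv0\pmod{\gcd(\theta_1,\theta_2)}$.
   Context: A $(v,k,\lambda,\mu)$-PDS in a group $G$ of order $v$ is a $k$-subset $D$ such that every nonidentity element of $D$ is $xy^{-1}$ ($x,y\in D$) in exactly $\lambda$ ways and every nonidentity element of $G\setminus D$ in exactly $\mu$ ways; regular means $D=D^{(-1)}$ and $1\notin D$. $\Delta=(\lambda-\mu)^2+4(k-\mu)$, $\theta_{1,2}=\frac12(\lambda-\mu\pm\sqrt\Delta)$. *)

theory Defs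
  imports "HOL-Algebra.Group" "HOL-Analysis.Analysis"
begin

definition is_pds :: "('a, 'b) monoid_scheme \<Rightarrow> 'a set \<Rightarrow> nat \<Rightarrow> nat \<Rightarrow> nat \<Rightarrow> nat \<Rightarrow> bool" where
  "is_pds G D v k lam mu \<longleftrightarrow>
     card (carrier G) = v \<and> D \<subseteq> carrier G \<and> card D = k \<and>
     (\<forall>g \<in> carrier G. g \<noteq> \<one>\<^bsub>G\<^esub> \<longrightarrow>
        card {(x, y). x \<in> D \<and> y \<in> D \<and> x \<otimes>\<^bsub>G\<^esub> inv\<^bsub>G\<^esub> y = g}
          = (if g \<in> D then lam else mu))"

definition is_regular_pds :: "('a, 'b) monoid_scheme \<Rightarrow> 'a set \<Rightarrow> nat \<Rightarrow> nat \<Rightarrow> nat \<Rightarrow> nat \<Rightarrow> bool" where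
  "is_regular_pds G D v k lam mu \<longleftrightarrow>
     is_pds G D v k lam mu \<and> (\<lambda>x. inv\<^bsub>G\<^esub> x) ` D = D \<and> \<one>\<^bsub>G\<^esub> \<notin> D"

definition pds_Delta :: "nat \<Rightarrow> nat \<Rightarrow> nat \<Rightarrow> int" where
  "pds_Delta k lam mu = (int lam - int mu)^2 + 4 * (int k - int mu)"

definition pds_theta1 :: "nat \<Rightarrow> nat \<Rightarrow> nat \<Rightarrow> real" where
  "pds_theta1 k lam mu = (real lam - real mu + sqrt (real_of_int (pds_Delta k lam mu))) / 2"

definition pds_theta2 :: "nat \<Rightarrow> nat \<Rightarrow> nat \<Rightarrow> real" where
  "pds_theta2 k lam mu = (real lam - real mu - sqrt (real_of_int (pds_Delta k lam mu))) / 2"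

end

theory Submission imports Defs "Jordan_Normal_Form.Schur_Decomposition" begin

lemma mult_entry:
  fixes X Y :: "'a::comm_ring_1 mat"
  assumes "X \<in> carrier_mat n m" "Y \<in> carrier_mat m r" "i < n" "j < r"
  shows "(X*Y)$$(i,j) = (\<Sum>l<m. X$$(i,l) * Y$$(l,j))"
  using assms by (auto simp: scalar_prod_def atLeast0LessThan intro!: sum.cong)

lemma ut_mult:
  fixes X Y :: "'a::comm_ring_1 mat"
  assumes X: "X \<in> carrier_mat n n" and Y: "Y \<in> carrier_mat n n"
    and uX: "upper_triangular X" and uY: "upper_triangular Y"
  shows "upper_triangular (X*Y)" and "i < n \<Longrightarrow> (X*Y)$$(i,i) = X$$(i,i)*Y$$(i,i)"
proof -
  show "upper_triangular (X*Y)"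
  proof (rule upper_triangularI)
    fix i j assume ji: "j < i" and i: "i < dim_row (X*Y)"
    hence i': "i < n" using X by auto
    have "(X*Y)$$(i,j) = (\<Sum>l<n. X$$(i,l) * Y$$(l,j))"
      using mult_entry[OF X Y i'] ji i' by auto
    also have "\<dots> = 0"
    proof (rule sum.neutral, intro ballI)
      fix l assume l: "l \<in> {..<n}"
      show "X$$(i,l) * Y$$(l,j) = 0"
      proof (cases "l < i")
        case True then show ?thesis using upper_triangularD[OF uX True] i' X by auto
      next
        case False then have "j < l" using ji by auto
        then show ?thesis using upper_triangularD[OF uY] l Y by auto
      qed
    qed
    finally show "(X*Y)$$(i,j) = 0" .
  qed
next
  assume i: "i < n"
  have "(X*Y)$$(i,i) = (\<Sum>l<n. X$$(i,l) * Y$$(l,i))"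
    using mult_entry[OF X Y i i] .
  also have "\<dots> = (\<Sum>l<n. if l = i then X$$(i,i) * Y$$(i,i) else 0)"
  proof (rule sum.cong[OF refl])
    fix l assume l: "l \<in> {..<n}"
    show "X$$(i,l) * Y$$(l,i) = (if l = i then X$$(i,i) * Y$$(i,i) else 0)"
    proof (cases "l < i")
      case True then show ?thesis using upper_triangularD[OF uX True] i X by auto
    next
      case False
      show ?thesis
      proof (cases "l = i")
        case False2: False
        then have "i < l" using False by auto
        then show ?thesis using upper_triangularD[OF uY] l Y False2 by auto
      qed auto
    qed
  qed
  also have "\<dots> = X$$(i,i) * Y$$(i,i)" using i by simp
  finally show "(X*Y)$$(i,i) = X$$(i,i)*Y$$(i,i)" .
qed

lemma tr_comm:
  fixes X Y :: "'a::comm_ring_1 mat"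
  assumes X: "X \<in> carrier_mat n m" and Y: "Y \<in> carrier_mat m n"
  shows "(\<Sum>i<n. (X*Y)$$(i,i)) = (\<Sum>j<m. (Y*X)$$(j,j))"
proof -
  have "(\<Sum>i<n. (X*Y)$$(i,i)) = (\<Sum>i<n. \<Sum>l<m. X$$(i,l) * Y$$(l,i))"
    using mult_entry[OF X Y] by auto
  also have "\<dots> = (\<Sum>l<m. \<Sum>i<n. Y$$(l,i) * X$$(i,l))"
    by (subst sum.swap) (simp add: mult.commute)
  also have "\<dots> = (\<Sum>j<m. (Y*X)$$(j,j))"
    using mult_entry[OF Y X] by auto
  finally show ?thesis .
qed

lemma sum_indicator_card:
  "(\<Sum>l\<in>A. if P l then (1::complex) else 0) = of_nat (card {l\<in>A. P l})" if "finite A"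
  using that by (simp add: sum.inter_filter[symmetric])

context group
begin

lemma g_cancel:
  assumes "a \<in> carrier G" "x \<in> carrier G" "y \<in> carrier G" "a \<otimes> inv x = a \<otimes> inv y"
  shows "x = y"
  using assms by (metis inv_closed inv_inv Units_eq Units_l_cancel)

lemma g_solve:
  assumes "a \<in> carrier G" "x \<in> carrier G"
  shows "a \<otimes> inv (inv x \<otimes> a) = x"
  using assms by (simp add: inv_mult_group m_assoc[symmetric])

lemma g_one_iff:
  assumes "x \<in> carrier G" "y \<in> carrier G"
  shows "x \<otimes> inv y = \<one> \<longleftrightarrow> x = y"
  using assms by (metis inv_closed inv_inv l_inv_ex inv_equality r_inv)

lemma g_inv_prod:
  assumes "x \<in> carrier G" "y \<in> carrier G"
  shows "inv (x \<otimes> inv y) = y \<otimes> inv x"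
  using assms by (simp add: inv_mult_group)

end


lemma smult_smult: "(a::'a::semigroup_mult) \<cdot>\<^sub>m (b \<cdot>\<^sub>m X) = (a*b) \<cdot>\<^sub>m X"
  by (rule eq_matI) (auto simp: mult.assoc)

lemma core:
  fixes A J :: "complex mat" and c d mu k t1 t2 :: complex
  assumes A: "A \<in> carrier_mat n n" and J: "J \<in> carrier_mat n n" and n: "n > 0"
    and AA: "A*A = c \<cdot>\<^sub>m A + d \<cdot>\<^sub>m 1\<^sub>m n + mu \<cdot>\<^sub>m J"
    and AJ: "A*J = k \<cdot>\<^sub>m J" and JJ: "J*J = of_nat n \<cdot>\<^sub>m J"
    and diagA: "\<And>i. i<n \<Longrightarrow> A$$(i,i) = 0" and diagJ: "\<And>i. i<n \<Longrightarrow> J$$(i,i) = 1"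
    and mu: "mu \<noteq> 0" and t: "t1 + t2 = c" "t1 * t2 = - d"
  shows "\<exists>f g::nat. k = - (of_nat f * t1 + of_nat g * t2)"
proof -
  have AAc: "A*A \<in> carrier_mat n n" using A by auto
  have key: "k*k = c*k + d + mu * of_nat n"
  proof -
    have "(A*A)*J = A*(A*J)" using A J by (simp add: assoc_mult_mat[of _ n n _ n _ n] mult_carrier_mat)
    also have "\<dots> = k \<cdot>\<^sub>m (k \<cdot>\<^sub>m J)" using A J by (simp add: AJ mult_smult_distrib)
    finally have e1: "(A*A)*J = k \<cdot>\<^sub>m (k \<cdot>\<^sub>m J)" .
    have h1: "(c \<cdot>\<^sub>m A + d \<cdot>\<^sub>m 1\<^sub>m n + mu \<cdot>\<^sub>m J)*J = (c \<cdot>\<^sub>m A + d \<cdot>\<^sub>m 1\<^sub>m n)*J + (mu \<cdot>\<^sub>m J)*J"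
      by (rule add_mult_distrib_mat[of _ n n]) (use A J in auto)
    have h2: "(c \<cdot>\<^sub>m A + d \<cdot>\<^sub>m 1\<^sub>m n)*J = (c \<cdot>\<^sub>m A)*J + (d \<cdot>\<^sub>m 1\<^sub>m n)*J"
      by (rule add_mult_distrib_mat[of _ n n]) (use A J in auto)
    have "(A*A)*J = c \<cdot>\<^sub>m (A*J) + d \<cdot>\<^sub>m J + mu \<cdot>\<^sub>m (J*J)"
      using h1 h2 A J mult_smult_assoc_mat[OF A J] mult_smult_assoc_mat[OF J J]
        mult_smult_assoc_mat[OF one_carrier_mat J] by (simp add: AA)
    then have e2: "(A*A)*J = c \<cdot>\<^sub>m (k \<cdot>\<^sub>m J) + d \<cdot>\<^sub>m J + mu \<cdot>\<^sub>m (of_nat n \<cdot>\<^sub>m J)"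
      by (simp add: AJ JJ)
    have "(k \<cdot>\<^sub>m (k \<cdot>\<^sub>m J))$$(0,0) = (c \<cdot>\<^sub>m (k \<cdot>\<^sub>m J) + d \<cdot>\<^sub>m J + mu \<cdot>\<^sub>m (of_nat n \<cdot>\<^sub>m J))$$(0,0)"
      using e1 e2 by simp
    then show ?thesis using J n diagJ[of 0] by (simp add: algebra_simps)
  qed
  have A3: "A*(A*A) = c \<cdot>\<^sub>m (A*A) + d \<cdot>\<^sub>m A + (mu*k) \<cdot>\<^sub>m J"
  proof -
    have h1: "A*(c \<cdot>\<^sub>m A + d \<cdot>\<^sub>m 1\<^sub>m n + mu \<cdot>\<^sub>m J) = A*(c \<cdot>\<^sub>m A + d \<cdot>\<^sub>m 1\<^sub>m n) + A*(mu \<cdot>\<^sub>m J)"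
      by (rule mult_add_distrib_mat[of _ n n]) (use A J in auto)
    have h2: "A*(c \<cdot>\<^sub>m A + d \<cdot>\<^sub>m 1\<^sub>m n) = A*(c \<cdot>\<^sub>m A) + A*(d \<cdot>\<^sub>m 1\<^sub>m n)"
      by (rule mult_add_distrib_mat[of _ n n]) (use A J in auto)
    have "A*(A*A) = c \<cdot>\<^sub>m (A*A) + d \<cdot>\<^sub>m A + (mu*k) \<cdot>\<^sub>m J"
      using h1 h2 A J mult_smult_distrib[OF A A] mult_smult_distrib[OF A J] mult_smult_distrib[OF A one_carrier_mat]
      by (simp add: AA[symmetric] AJ smult_smult)
    then show ?thesis .
  qed
  obtain es where es: "char_poly A = (\<Prod>a\<leftarrow>es. [:- a, 1:])"
    using char_poly_factorized[OF A] by auto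
  obtain B P Q where sd: "schur_decomposition A es = (B,P,Q)"
    by (cases "schur_decomposition A es") auto
  from schur_decomposition[OF A es sd]
  have sim: "similar_mat_wit A B P Q" and ut: "upper_triangular B" by auto
  from similar_mat_witD2[OF A sim]
  have B: "B \<in> carrier_mat n n" and P: "P \<in> carrier_mat n n" and Q: "Q \<in> carrier_mat n n"
    and PQ: "P*Q = 1\<^sub>m n" and QP: "Q*P = 1\<^sub>m n" and APBQ: "A = P*B*Q" by auto
  have conj: "Q*(P*X*Q)*P = X" if X: "X \<in> carrier_mat n n" for X
  proof -
    have "Q*(P*X*Q)*P = (Q*P)*X*(Q*P)"
      using P Q X by (simp add: assoc_mult_mat[of _ n n _ n _ n] mult_carrier_mat)
    then show ?thesis using QP X by simp
  qed
  have BQAP: "B = Q*A*P" using conj[OF B] APBQ by simp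
  have BB: "B*B = Q*(A*A)*P"
  proof -
    have "Q*(A*A)*P = Q*((P*B*Q)*(P*B*Q))*P" using APBQ by simp
    also have "(P*B*Q)*(P*B*Q) = P*(B*B)*Q"
    proof -
      have "(P*B*Q)*(P*B*Q) = P*B*(Q*P)*B*Q" using P B Q by (simp add: assoc_mult_mat[of _ n n _ n _ n] mult_carrier_mat)
      then show ?thesis using P B Q QP by (simp add: assoc_mult_mat[of _ n n _ n _ n] mult_carrier_mat)
    qed
    finally show ?thesis using conj[of "B*B"] B by simp
  qed
  have BBB: "B*(B*B) = Q*(A*(A*A))*P"
  proof -
    have "Q*(A*(A*A))*P = Q*((P*B*Q)*(P*B*Q)*(P*B*Q))*P" using APBQ P B Q by (simp add: assoc_mult_mat[of _ n n _ n _ n] mult_carrier_mat)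
    also have "(P*B*Q)*(P*B*Q)*(P*B*Q) = P*(B*(B*B))*Q"
    proof -
      have "(P*B*Q)*(P*B*Q)*(P*B*Q) = P*B*(Q*P)*B*(Q*P)*B*Q" using P B Q by (simp add: assoc_mult_mat[of _ n n _ n _ n] mult_carrier_mat)
      then show ?thesis using P B Q QP by (simp add: assoc_mult_mat[of _ n n _ n _ n] mult_carrier_mat)
    qed
    finally show ?thesis using conj[of "B*(B*B)"] B by simp
  qed
  define phi where "phi i X = (Q*X*P)$$(i,i)" for i X
  have phi_add: "phi i (X + Y) = phi i X + phi i Y"
    if "X \<in> carrier_mat n n" "Y \<in> carrier_mat n n" "i < n" for i X Y
  proof -
    have "Q*(X+Y) = Q*X + Q*Y" using that P Q by (simp add: mult_add_distrib_mat[of _ n n])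
    moreover have "(Q*X + Q*Y)*P = Q*X*P + Q*Y*P"
      using that P Q by (simp add: add_mult_distrib_mat[of _ n n])
    ultimately have "Q*(X+Y)*P = Q*X*P + Q*Y*P" by simp
    then show ?thesis unfolding phi_def using that P Q by simp
  qed
  have phi_smult: "phi i (a \<cdot>\<^sub>m X) = a * phi i X"
    if "X \<in> carrier_mat n n" "i < n" for i X a
  proof -
    have "Q*(a \<cdot>\<^sub>m X)*P = a \<cdot>\<^sub>m (Q*X*P)"
      using that P Q by (simp add: mult_smult_distrib[of _ n n] mult_smult_assoc_mat[of _ n n] assoc_mult_mat[of _ n n _ n _ n])
    then show ?thesis unfolding phi_def using that P Q by simp
  qed
  have phi_one: "phi i (1\<^sub>m n) = 1" if "i < n" for i
    unfolding phi_def using QP P Q that by simp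
  define b where "b i = B$$(i,i)" for i
  have b1: "b i = phi i A" if "i < n" for i unfolding b_def phi_def using BQAP by simp
  have b2: "b i * b i = phi i (A*A)" if "i < n" for i
    unfolding b_def phi_def using BB ut_mult(2)[OF B B ut ut that] by simp
  have b3: "b i * (b i * b i) = phi i (A*(A*A))" if "i < n" for i
    unfolding b_def phi_def using BBB ut_mult(2)[OF B _ ut ut_mult(1)[OF B B ut ut] that]
      ut_mult(2)[OF B B ut ut that] B by simp
  have cubic: "(b i - k) * (b i * b i - c * b i - d) = 0" if i: "i < n" for i
  proof -
    have e2: "b i * b i = c * b i + d + mu * phi i J"
      using b2[OF i] b1[OF i] phi_add phi_smult phi_one A J i by (simp add: AA)
    have e3: "b i * (b i * b i) = c * (b i * b i) + d * b i + (mu * k) * phi i J"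
      using b3[OF i] b2[OF i] b1[OF i] phi_add phi_smult A J i AAc by (simp add: A3)
    show ?thesis using e2 e3 by (simp add: algebra_simps)
  qed
  have trace: "(\<Sum>i<n. phi i X) = (\<Sum>i<n. X$$(i,i))" if X: "X \<in> carrier_mat n n" for X
  proof -
    have "(\<Sum>i<n. phi i X) = (\<Sum>i<n. ((Q*X)*P)$$(i,i))" unfolding phi_def ..
    also have "\<dots> = (\<Sum>i<n. (P*(Q*X))$$(i,i))"
      by (rule tr_comm) (use P Q X in auto)
    also have "P*(Q*X) = X" using P Q X PQ by (simp add: assoc_mult_mat[of _ n n _ n _ n, symmetric] mult_carrier_mat)
    finally show ?thesis .
  qed
  have sum1: "(\<Sum>i<n. b i) = 0"
    using trace[OF A] b1 diagA by simp
  have sum2: "(\<Sum>i<n. b i * b i) = d * of_nat n + mu * of_nat n"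
  proof -
    have "(\<Sum>i<n. b i * b i) = (\<Sum>i<n. (A*A)$$(i,i))"
      using trace[OF AAc] b2 by simp
    also have "\<dots> = (\<Sum>i<n. d + mu)"
      by (rule sum.cong) (use A J diagA diagJ in \<open>auto simp: AA\<close>)
    finally show ?thesis by (simp add: algebra_simps)
  qed
  define S where "S = {..<n} \<inter> {i. b i = k}"
  define A' where "A' = {..<n} \<inter> - {i. b i = k}"
  have sumq: "(\<Sum>i<n. b i * b i - c * b i - d) = mu * of_nat n"
    using sum1 sum2 by (simp add: sum_subtractf sum_distrib_left[symmetric])
  have "(\<Sum>i<n. b i * b i - c * b i - d) = (\<Sum>i<n. if b i = k then mu * of_nat n else 0)"
  proof (rule sum.cong[OF refl])
    fix i assume i: "i \<in> {..<n}"
    show "b i * b i - c * b i - d = (if b i = k then mu * of_nat n else 0)"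
    proof (cases "b i = k")
      case True then show ?thesis using key by (simp add: algebra_simps)
    next
      case False
      then have "b i - k \<noteq> 0" by simp
      then have "b i * b i - c * b i - d = 0" using cubic[of i] i by simp
      then show ?thesis using False by simp
    qed
  qed
  also have "\<dots> = (\<Sum>i\<in>S. mu * of_nat n) + (\<Sum>i\<in>A'. 0)"
    unfolding S_def A'_def by (rule sum.If_cases) simp
  also have "\<dots> = of_nat (card S) * (mu * of_nat n)" by simp
  finally have "of_nat (card S) * (mu * of_nat n) = 1 * (mu * of_nat n)" using sumq by simp
  then have cS: "card S = 1" using mu n by simp
  have roots: "b i = t1 \<or> b i = t2" if "i < n" "b i \<noteq> k" for i
  proof -
    have "(b i - t1) * (b i - t2) = b i * b i - (t1 + t2) * b i + t1 * t2"
      by (simp add: algebra_simps)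
    also have "\<dots> = b i * b i - c * b i - d" using t by simp
    finally have "(b i - t1) * (b i - t2) = b i * b i - c * b i - d" .
    moreover have "b i - k \<noteq> 0" using that by simp
    ultimately have "(b i - t1) * (b i - t2) = 0" using cubic[OF that(1)] by simp
    then show ?thesis by simp
  qed
  have "(\<Sum>i<n. b i) = (\<Sum>i<n. if b i = k then k else if b i = t1 then t1 else t2)"
    by (rule sum.cong[OF refl]) (use roots in auto)
  also have "\<dots> = (\<Sum>i\<in>S. k) + (\<Sum>i\<in>A'. if b i = t1 then t1 else t2)"
    unfolding S_def A'_def by (rule sum.If_cases) simp
  also have "(\<Sum>i\<in>A'. if b i = t1 then t1 else t2) = (\<Sum>i\<in>A' \<inter> {i. b i = t1}. t1) + (\<Sum>i\<in>A' \<inter> - {i. b i = t1}. t2)"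
    by (rule sum.If_cases) (simp add: A'_def)
  finally have "0 = k + (of_nat (card (A' \<inter> {i. b i = t1})) * t1 + of_nat (card (A' \<inter> - {i. b i = t1})) * t2)"
    using sum1 cS by simp
  then have "k = - (of_nat (card (A' \<inter> {i. b i = t1})) * t1 + of_nat (card (A' \<inter> - {i. b i = t1})) * t2)"
    by (metis add.commute add_eq_0_iff)
  then show ?thesis by blast
qed

lemma (in group) pds_mat:
  assumes fin: "finite (carrier G)" and R: "is_regular_pds G D v k lam mu"
  shows "\<exists>A J :: complex mat. A \<in> carrier_mat v v \<and> J \<in> carrier_mat v v \<and>
     A*A = of_int (int lam - int mu) \<cdot>\<^sub>m A + of_int (int k - int mu) \<cdot>\<^sub>m 1\<^sub>m v + of_nat mu \<cdot>\<^sub>m J \<and>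
     A*J = of_nat k \<cdot>\<^sub>m J \<and> J*J = of_nat v \<cdot>\<^sub>m J \<and> (\<forall>i<v. A$$(i,i) = 0) \<and> (\<forall>i<v. J$$(i,i) = 1)"
proof -
  have cv: "card (carrier G) = v" and DG: "D \<subseteq> carrier G" and cD: "card D = k"
    and pds: "\<And>g. g \<in> carrier G \<Longrightarrow> g \<noteq> \<one> \<Longrightarrow>
        card {(x, y). x \<in> D \<and> y \<in> D \<and> x \<otimes> inv y = g} = (if g \<in> D then lam else mu)"
    and invD: "(\<lambda>x. inv x) ` D = D" and oneD: "\<one> \<notin> D"
    using R unfolding is_regular_pds_def is_pds_def by auto
  have invD': "inv x \<in> D \<longleftrightarrow> x \<in> D" if "x \<in> carrier G" for x
  proof
    assume "inv x \<in> D"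
    then have "inv (inv x) \<in> (\<lambda>x. inv x) ` D" by blast
    then show "x \<in> D" using invD that by simp
  next
    assume "x \<in> D" then show "inv x \<in> D" using invD by blast
  qed
  obtain e where e0: "bij_betw e {0..<v} (carrier G)"
    using ex_bij_betw_nat_finite[OF fin] cv by auto
  have e: "bij_betw e {..<v} (carrier G)" using e0 by (simp add: atLeast0LessThan)
  have eC: "e i \<in> carrier G" if "i < v" for i using e that bij_betwE by blast
  have einj: "e i = e j \<Longrightarrow> i < v \<Longrightarrow> j < v \<Longrightarrow> i = j" for i j
    using e unfolding bij_betw_def inj_on_def by auto
  have esurj: "\<exists>l<v. e l = x" if "x \<in> carrier G" for x
    using e that unfolding bij_betw_def by force
  have cnt1: "card {l\<in>{..<v}. a \<otimes> inv (e l) \<in> D} = k" if a: "a \<in> carrier G" for a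
  proof -
    have "bij_betw (\<lambda>l. a \<otimes> inv (e l)) {l\<in>{..<v}. a \<otimes> inv (e l) \<in> D} D"
    proof (rule bij_betw_imageI)
      show "inj_on (\<lambda>l. a \<otimes> inv (e l)) {l\<in>{..<v}. a \<otimes> inv (e l) \<in> D}"
        using g_cancel[OF a] eC einj unfolding inj_on_def by auto
      show "(\<lambda>l. a \<otimes> inv (e l)) ` {l\<in>{..<v}. a \<otimes> inv (e l) \<in> D} = D"
      proof
        show "D \<subseteq> (\<lambda>l. a \<otimes> inv (e l)) ` {l\<in>{..<v}. a \<otimes> inv (e l) \<in> D}"
        proof
          fix x assume x: "x \<in> D"
          then have xC: "x \<in> carrier G" using DG by auto
          obtain l where l: "l < v" "e l = inv x \<otimes> a" using esurj[of "inv x \<otimes> a"] xC a by auto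
          have "a \<otimes> inv (e l) = x" using l g_solve[OF a xC] by simp
          then show "x \<in> (\<lambda>l. a \<otimes> inv (e l)) ` {l\<in>{..<v}. a \<otimes> inv (e l) \<in> D}"
            using l x by force
        qed
      qed auto
    qed
    then show ?thesis using cD bij_betw_same_card by metis
  qed
  have cnt2: "card {l\<in>{..<v}. a \<otimes> inv (e l) \<in> D \<and> e l \<otimes> inv b \<in> D}
      = card {(x, y). x \<in> D \<and> y \<in> D \<and> x \<otimes> inv y = a \<otimes> inv b}"
    if a: "a \<in> carrier G" and b: "b \<in> carrier G" for a b
  proof -
    let ?L = "{l\<in>{..<v}. a \<otimes> inv (e l) \<in> D \<and> e l \<otimes> inv b \<in> D}"
    let ?R = "{(x, y). x \<in> D \<and> y \<in> D \<and> x \<otimes> inv y = a \<otimes> inv b}"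
    have "bij_betw (\<lambda>l. (a \<otimes> inv (e l), b \<otimes> inv (e l))) ?L ?R"
    proof (rule bij_betw_imageI)
      show "inj_on (\<lambda>l. (a \<otimes> inv (e l), b \<otimes> inv (e l))) ?L"
        using g_cancel[OF a] eC einj unfolding inj_on_def by auto
      show "(\<lambda>l. (a \<otimes> inv (e l), b \<otimes> inv (e l))) ` ?L = ?R"
      proof
        show "(\<lambda>l. (a \<otimes> inv (e l), b \<otimes> inv (e l))) ` ?L \<subseteq> ?R"
        proof
          fix z assume "z \<in> (\<lambda>l. (a \<otimes> inv (e l), b \<otimes> inv (e l))) ` ?L"
          then obtain l where l: "l < v" "a \<otimes> inv (e l) \<in> D" "e l \<otimes> inv b \<in> D"
            and z: "z = (a \<otimes> inv (e l), b \<otimes> inv (e l))" by auto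
          have el: "e l \<in> carrier G" using eC l by auto
          have "inv (e l \<otimes> inv b) = b \<otimes> inv (e l)" using g_inv_prod[OF el b] .
          then have "b \<otimes> inv (e l) \<in> D" using invD' l(3) el b by (metis inv_closed m_closed)
          moreover have "a \<otimes> inv (e l) \<otimes> inv (b \<otimes> inv (e l)) = a \<otimes> inv b"
            using a b el by (simp add: inv_mult_group m_assoc) (simp add: m_assoc[symmetric])
          ultimately show "z \<in> ?R" using l z by auto
        qed
        show "?R \<subseteq> (\<lambda>l. (a \<otimes> inv (e l), b \<otimes> inv (e l))) ` ?L"
        proof clarify
          fix x y assume xy: "x \<in> D" "y \<in> D" "x \<otimes> inv y = a \<otimes> inv b"
          have xC: "x \<in> carrier G" and yC: "y \<in> carrier G" using xy DG by auto
          obtain l where l: "l < v" "e l = inv x \<otimes> a" using esurj[of "inv x \<otimes> a"] xC a by auto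
          have 1: "a \<otimes> inv (e l) = x" using l g_solve[OF a xC] by simp
          have "inv (x \<otimes> inv y) = inv (a \<otimes> inv b)" using xy by simp
          then have yx: "y \<otimes> inv x = b \<otimes> inv a" using g_inv_prod xC yC a b by simp
          have 2: "b \<otimes> inv (e l) = y"
          proof -
            have "b \<otimes> inv (e l) = b \<otimes> inv a \<otimes> x" using l a xC b by (simp add: inv_mult_group m_assoc)
            also have "\<dots> = y \<otimes> inv x \<otimes> x" using yx by simp
            also have "\<dots> = y" using xC yC by (simp add: m_assoc)
            finally show ?thesis .
          qed
          have 3: "e l \<otimes> inv b = inv y"
          proof -
            have "e l \<otimes> inv b = inv x \<otimes> (a \<otimes> inv b)" using l a b xC by (simp add: m_assoc)
            also have "\<dots> = inv x \<otimes> (x \<otimes> inv y)" using xy by simp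
            also have "\<dots> = inv y" using xC yC by (simp add: m_assoc[symmetric])
            finally show ?thesis .
          qed
          have "inv y \<in> D" using invD' yC xy by simp
          then show "(x, y) \<in> (\<lambda>l. (a \<otimes> inv (e l), b \<otimes> inv (e l))) ` ?L"
            using 1 2 3 l xy by (auto intro!: image_eqI[of _ _ l])
        qed
      qed
    qed
    then show ?thesis by (rule bij_betw_same_card)
  qed
  have diag_set: "{(x, y). x \<in> D \<and> y \<in> D \<and> x \<otimes> inv y = \<one>} = (\<lambda>x. (x,x)) ` D"
  proof
    show "{(x, y). x \<in> D \<and> y \<in> D \<and> x \<otimes> inv y = \<one>} \<subseteq> (\<lambda>x. (x,x)) ` D"
    proof clarify
      fix x y assume "x \<in> D" "y \<in> D" "x \<otimes> inv y = \<one>"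
      then have "x = y" using DG g_one_iff by blast
      then show "(x, y) \<in> (\<lambda>x. (x,x)) ` D" using \<open>x \<in> D\<close> by blast
    qed
  qed (use DG g_one_iff in auto)
  have cnt_diag: "card {(x, y). x \<in> D \<and> y \<in> D \<and> x \<otimes> inv y = \<one>} = k"
    unfolding diag_set using cD by (simp add: card_image inj_on_def)
  define A :: "complex mat" where "A = Matrix.mat v v (\<lambda>(i,j). if e i \<otimes> inv (e j) \<in> D then 1 else 0)"
  define J :: "complex mat" where "J = Matrix.mat v v (\<lambda>_. 1)"
  have Ac: "A \<in> carrier_mat v v" and Jc: "J \<in> carrier_mat v v" unfolding A_def J_def by auto
  have AA: "A*A = of_int (int lam - int mu) \<cdot>\<^sub>m A + of_int (int k - int mu) \<cdot>\<^sub>m 1\<^sub>m v + of_nat mu \<cdot>\<^sub>m J"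
  proof (rule eq_matI)
    fix i j assume i: "i < dim_row (of_int (int lam - int mu) \<cdot>\<^sub>m A + of_int (int k - int mu) \<cdot>\<^sub>m 1\<^sub>m v + of_nat mu \<cdot>\<^sub>m J)"
      and j: "j < dim_col (of_int (int lam - int mu) \<cdot>\<^sub>m A + of_int (int k - int mu) \<cdot>\<^sub>m 1\<^sub>m v + of_nat mu \<cdot>\<^sub>m J)"
    have i: "i < v" and j: "j < v" using i j Ac Jc by auto
    have "(A*A)$$(i,j) = (\<Sum>l<v. A$$(i,l) * A$$(l,j))" using mult_entry[OF Ac Ac i j] .
    also have "\<dots> = (\<Sum>l\<in>{..<v}. if e i \<otimes> inv (e l) \<in> D \<and> e l \<otimes> inv (e j) \<in> D then 1 else 0)"
      using i j unfolding A_def by (intro sum.cong) auto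
    also have "\<dots> = of_nat (card {(x, y). x \<in> D \<and> y \<in> D \<and> x \<otimes> inv y = e i \<otimes> inv (e j)})"
      using sum_indicator_card[of "{..<v}" "\<lambda>l. e i \<otimes> inv (e l) \<in> D \<and> e l \<otimes> inv (e j) \<in> D"] cnt2[OF eC[OF i] eC[OF j]] by simp
    also have "\<dots> = (of_int (int lam - int mu) \<cdot>\<^sub>m A + of_int (int k - int mu) \<cdot>\<^sub>m 1\<^sub>m v + of_nat mu \<cdot>\<^sub>m J)$$(i,j)"
    proof (cases "i = j")
      case True
      then show ?thesis using i eC[OF i] cnt_diag oneD unfolding A_def J_def by simp
    next
      case False
      then have ne: "e i \<otimes> inv (e j) \<noteq> \<one>" using g_one_iff eC i j einj by blast
      show ?thesis using False pds[OF _ ne] eC i j unfolding A_def J_def by simp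
    qed
    finally show "(A*A)$$(i,j) = (of_int (int lam - int mu) \<cdot>\<^sub>m A + of_int (int k - int mu) \<cdot>\<^sub>m 1\<^sub>m v + of_nat mu \<cdot>\<^sub>m J)$$(i,j)" .
  qed (use Ac Jc in auto)
  have AJ: "A*J = of_nat k \<cdot>\<^sub>m J"
  proof (rule eq_matI)
    fix i j assume i: "i < dim_row (of_nat k \<cdot>\<^sub>m J)" and j: "j < dim_col (of_nat k \<cdot>\<^sub>m J)"
    have i: "i < v" and j: "j < v" using i j Jc by auto
    have "(A*J)$$(i,j) = (\<Sum>l<v. A$$(i,l) * J$$(l,j))" using mult_entry[OF Ac Jc i j] .
    also have "\<dots> = (\<Sum>l\<in>{..<v}. if e i \<otimes> inv (e l) \<in> D then 1 else 0)"
      using i j unfolding A_def J_def by (intro sum.cong) auto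
    also have "\<dots> = of_nat k" using sum_indicator_card[of "{..<v}" "\<lambda>l. e i \<otimes> inv (e l) \<in> D"] cnt1[OF eC[OF i]] by simp
    finally show "(A*J)$$(i,j) = (of_nat k \<cdot>\<^sub>m J)$$(i,j)" using i j unfolding J_def by simp
  qed (use Ac Jc in auto)
  have JJ: "J*J = of_nat v \<cdot>\<^sub>m J"
  proof (rule eq_matI)
    fix i j assume i: "i < dim_row (of_nat v \<cdot>\<^sub>m J)" and j: "j < dim_col (of_nat v \<cdot>\<^sub>m J)"
    have i: "i < v" and j: "j < v" using i j Jc by auto
    have "(J*J)$$(i,j) = (\<Sum>l<v. J$$(i,l) * J$$(l,j))" using mult_entry[OF Jc Jc i j] .
    also have "\<dots> = (\<Sum>l<v. 1)" using i j unfolding J_def by (intro sum.cong) auto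
    finally show "(J*J)$$(i,j) = (of_nat v \<cdot>\<^sub>m J)$$(i,j)" using i j unfolding J_def by simp
  qed (use Jc in auto)
  have dA: "\<forall>i<v. A$$(i,i) = 0" using eC oneD unfolding A_def by simp
  have dJ: "\<forall>i<v. J$$(i,i) = 1" unfolding J_def by simp
  show ?thesis using Ac Jc AA AJ JJ dA dJ by blast
qed


lemma theta_sum_prod:
  assumes "mu < k"
  shows "pds_theta1 k lam mu + pds_theta2 k lam mu = real lam - real mu"
    and "pds_theta1 k lam mu * pds_theta2 k lam mu = - (real k - real mu)"
proof -
  let ?D = "real_of_int (pds_Delta k lam mu)"
  have D: "?D = (real lam - real mu)^2 + 4 * (real k - real mu)"
    unfolding pds_Delta_def by simp
  have "?D \<ge> 0" using D assms by (smt (verit) of_nat_less_iff zero_le_power2)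
  then have sq: "sqrt ?D * sqrt ?D = ?D" by simp
  show "pds_theta1 k lam mu + pds_theta2 k lam mu = real lam - real mu"
    unfolding pds_theta1_def pds_theta2_def by (simp add: field_simps)
  have "pds_theta1 k lam mu * pds_theta2 k lam mu = ((real lam - real mu)^2 - sqrt ?D * sqrt ?D) / 4"
    unfolding pds_theta1_def pds_theta2_def by (simp add: field_simps power2_eq_square)
  also have "\<dots> = - (real k - real mu)" using sq D by simp
  finally show "pds_theta1 k lam mu * pds_theta2 k lam mu = - (real k - real mu)" .
qed

lemma k_comb:
  fixes G :: "('a, 'b) monoid_scheme" and D :: "'a set" and v k lam mu :: nat
  assumes grp: "group G" and fin: "finite (carrier G)"
    and R: "is_regular_pds G D v k lam mu" and mu0: "0 < mu" and muk: "mu < k"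
  shows "\<exists>f g::nat. real k = - (real f * pds_theta1 k lam mu + real g * pds_theta2 k lam mu)"
proof -
  obtain A J :: "complex mat" where Ac: "A \<in> carrier_mat v v" and Jc: "J \<in> carrier_mat v v"
    and AA: "A*A = of_int (int lam - int mu) \<cdot>\<^sub>m A + of_int (int k - int mu) \<cdot>\<^sub>m 1\<^sub>m v + of_nat mu \<cdot>\<^sub>m J"
    and AJ: "A*J = of_nat k \<cdot>\<^sub>m J" and JJ: "J*J = of_nat v \<cdot>\<^sub>m J"
    and dA: "\<forall>i<v. A$$(i,i) = 0" and dJ: "\<forall>i<v. J$$(i,i) = 1"
    using group.pds_mat[OF grp fin R] by blast
  have cv: "card (carrier G) = v" using R unfolding is_regular_pds_def is_pds_def by auto
  have "\<one>\<^bsub>G\<^esub> \<in> carrier G" by (rule monoid.one_closed[OF group.is_monoid[OF grp]])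
  then have "carrier G \<noteq> {}" by blast
  then have v: "v > 0" unfolding cv[symmetric] card_gt_0_iff using fin by simp
  let ?t1 = "complex_of_real (pds_theta1 k lam mu)"
  let ?t2 = "complex_of_real (pds_theta2 k lam mu)"
  have t1: "?t1 + ?t2 = of_int (int lam - int mu)"
  proof -
    have "?t1 + ?t2 = complex_of_real (real lam - real mu)"
      by (simp only: of_real_add[symmetric] theta_sum_prod(1)[OF muk])
    then show ?thesis by simp
  qed
  have t2: "?t1 * ?t2 = - of_int (int k - int mu)"
  proof -
    have "?t1 * ?t2 = complex_of_real (- (real k - real mu))"
      by (simp only: of_real_mult[symmetric] theta_sum_prod(2)[OF muk])
    then show ?thesis by simp
  qed
  have mu': "(of_nat mu :: complex) \<noteq> 0" using mu0 by simp
  have dA': "\<And>i. i < v \<Longrightarrow> A$$(i,i) = 0" using dA by blast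
  have dJ': "\<And>i. i < v \<Longrightarrow> J$$(i,i) = 1" using dJ by blast
  from core[OF Ac Jc v AA AJ JJ dA' dJ' mu' t1 t2]
  obtain f g :: nat where fg: "(of_nat k :: complex) = - (of_nat f * ?t1 + of_nat g * ?t2)"
    by blast
  have "Re (of_nat k :: complex) = Re (- (of_nat f * ?t1 + of_nat g * ?t2))" using fg by simp
  then have "real k = - (real f * pds_theta1 k lam mu + real g * pds_theta2 k lam mu)" by simp
  then show ?thesis by blast
qed

theorem mainTheorem17:
  fixes G :: "('a, 'b) monoid_scheme" and D :: "'a set" and v k lam mu p l :: nat
  assumes "group G" and "finite (carrier G)"
    and "is_regular_pds G D v k lam mu"
    and "0 < mu" and "mu < k"
    and "sqrt (real_of_int (pds_Delta k lam mu)) \<in> \<int>"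
  shows "(prime p \<and> (\<exists>m::int. pds_theta1 k lam mu = real (p ^ l) * of_int m)
                   \<and> (\<exists>m::int. pds_theta2 k lam mu = real (p ^ l) * of_int m)
           \<longrightarrow> p ^ l dvd k)
       \<and> (\<forall>a b :: int. real_of_int a = pds_theta1 k lam mu \<and> real_of_int b = pds_theta2 k lam mu
           \<longrightarrow> gcd a b dvd int k)"
proof -
  obtain f g :: nat where fg: "real k = - (real f * pds_theta1 k lam mu + real g * pds_theta2 k lam mu)"
    using k_comb[OF assms(1-5)] by blast
  have part1: "p ^ l dvd k"
    if m1: "pds_theta1 k lam mu = real (p ^ l) * of_int m1"
    and m2: "pds_theta2 k lam mu = real (p ^ l) * of_int m2" for m1 m2 :: int
  proof -
    have "real_of_int (int k) = real_of_int (int (p ^ l) * (- (int f * m1 + int g * m2)))"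
      using fg m1 m2 by (simp add: algebra_simps)
    then have "int k = int (p ^ l) * (- (int f * m1 + int g * m2))" by (metis of_int_eq_iff)
    then have "int (p ^ l) dvd int k" by (metis dvdI)
    then show ?thesis by (simp only: int_dvd_int_iff)
  qed
  have part2: "gcd a b dvd int k"
    if ab: "real_of_int a = pds_theta1 k lam mu" "real_of_int b = pds_theta2 k lam mu" for a b :: int
  proof -
    have "real_of_int (int k) = real_of_int (- (int f * a + int g * b))"
      using fg ab by simp
    then have "int k = - (int f * a + int g * b)" by (metis of_int_eq_iff)
    moreover have "gcd a b dvd - (int f * a + int g * b)" by simp
    ultimately show ?thesis by simp
  qed
  show ?thesis using part1 part2 by blast
qed

end
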